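(* Let $\mathbf{H}_d,\mathbf{f}_a,\mathbf{f}_d,\mathbf{g}_a,\mathbf{g}_d,\mathbf{R}_{xx},\sigma^2$ be as in the rate maximization problem, and let $\mathcal{D}=\{\operatorname{diag}(e^{j\phi_1},\dots,e^{j\phi_M}):\phi_m\in\mathbb{R}\}$. Then an optimal solution of $$\max_{\boldsymbol{\Theta}\in\mathcal{D}}\log\det\Big(\mathbf{I}+\tfrac{1}{\sigma^2}\mathbf{H}(\boldsymbol{\Theta})\mathbf{R}_{xx}\mathbf{H}(\boldsymbol{\Theta})^H\Big)$$ is $\boldsymbol{\Theta}=e^{j\theta_{opt}}\operatorname{diag}(e^{j\tilde\theta_1},\dots,e^{j\tilde\theta_M})$ with $\tilde\theta_m=-\angle\big(\mathbf{f}_d(m)^*\mathbf{g}_a(m)\big)$ for $m=1,\dots,M$ (arbitrary if the product is zero) and $\theta_{opt}=-\angle\Big(\mathbf{g}_d^H\mathbf{R}_{xx}\mathbf{H}_d^H\big(\mathbf{I}+\tfrac{1}{\sigma^2}\mathbf{H}_d\mathbf{R}_{xx}\mathbf{H}_d^H\big)^{-1}\mathbf{f}_a\Big)$; the corresponding maximal value of $|\mathbf{f}_d^H\boldsymbol{\Theta}\mathbf{g}_a|$ over $\mathcal{D}$ is $\|\mathbf{f}_d^*\odot\mathbf{g}_a\|_1$. Moreover, if $\mathbf{f}_d=\beta_d\bar{\mathbf{f}}(\phi)$ and $\mathbf{g}_a=\beta_a\bar{\mathbf{f}}(\psi)$ with $\beta_d,\beta_a\ge0$, angles $\phi,\psi$,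 and $\bar{\mathbf{f}}(\phi)=\frac{1}{\sqrt M}(1,e^{-j\pi\sin\phi},\dots,e^{-j\pi(M-1)\sin\phi})^T$, then $\|\mathbf{f}_d^*\odot\mathbf{g}_a\|_1=\|\mathbf{f}_d\|\|\mathbf{g}_a\|$, so the optimal diagonal RIS achieves the same maximal rate as the optimal matrix in $\mathcal{T}$.
   Context: $\mathbf{H}(\boldsymbol{\Theta})=\mathbf{H}_d+\mathbf{f}_a\mathbf{f}_d^H\boldsymbol{\Theta}\mathbf{g}_a\mathbf{g}_d^H$, where $\mathbf{H}_d\in\mathbb{C}^{N_R\times N_T}$, $\mathbf{f}_a\in\mathbb{C}^{N_R}$, $\mathbf{f}_d,\mathbf{g}_a\in\mathbb{C}^M$, $\mathbf{g}_d\in\mathbb{C}^{N_T}$, $\mathbf{R}_{xx}$ Hermitian PSD, $\sigma^2>0$. $\mathcal{T}$ is the set of complex symmetric unitary $M\times M$ matrices. $\odot$ is the entrywise (Hadamard) product, $\|\cdot\|_1$ the $\ell_1$ norm, $\mathbf{v}(m)$ the $m$th entry of $\mathbf{v}$, $\angle$ the argument of a complex number, $(\cdot)^*$ complex conjugation. *)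

theory Defs
  imports "Jordan_Normal_Form.Determinant" "Jordan_Normal_Form.Conjugate"
begin

definition ctrans :: "complex mat \<Rightarrow> complex mat" where
  "ctrans A = mat (dim_col A) (dim_row A) (\<lambda>(i,j). cnj (A $$ (j,i)))"

definition vh :: "complex vec \<Rightarrow> complex vec \<Rightarrow> complex" where
  "vh x y = (\<Sum>i<dim_vec x. cnj (x $ i) * y $ i)"

definition outer :: "complex vec \<Rightarrow> complex vec \<Rightarrow> complex mat" where
  "outer x y = mat (dim_vec x) (dim_vec y) (\<lambda>(i,j). x $ i * cnj (y $ j))"

definition vnorm :: "complex vec \<Rightarrow> real" where
  "vnorm x = sqrt (\<Sum>i<dim_vec x. (cmod (x $ i))^2)"

definition minv :: "complex mat \<Rightarrow> complex mat" where
  "minv A = (SOME B. B \<in> carrier_mat (dim_row A) (dim_row A) \<and>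
                     A * B = 1\<^sub>m (dim_row A) \<and> B * A = 1\<^sub>m (dim_row A))"

definition herm_psd :: "nat \<Rightarrow> complex mat \<Rightarrow> bool" where
  "herm_psd n R \<longleftrightarrow> R \<in> carrier_mat n n \<and> ctrans R = R \<and>
     (\<forall>x \<in> carrier_vec n. 0 \<le> Re (vh x (R *\<^sub>v x)))"

definition Hch :: "complex mat \<Rightarrow> complex vec \<Rightarrow> complex vec \<Rightarrow> complex vec \<Rightarrow> complex vec
                    \<Rightarrow> complex mat \<Rightarrow> complex mat" where
  "Hch Hd fa fd ga gd Th = Hd + outer fa fd * Th * outer ga gd"

definition rate :: "real \<Rightarrow> complex mat \<Rightarrow> complex mat \<Rightarrow> real" where
  "rate s2 R H = ln (Re (det (1\<^sub>m (dim_row H) + of_real (1 / s2) \<cdot>\<^sub>m (H * R * ctrans H))))"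

definition diag_phase :: "nat \<Rightarrow> (nat \<Rightarrow> real) \<Rightarrow> complex mat" where
  "diag_phase M phi = mat_diag M (\<lambda>m. cis (phi m))"

definition sym_unitary :: "nat \<Rightarrow> complex mat set" where
  "sym_unitary M = {Th. Th \<in> carrier_mat M M \<and> transpose_mat Th = Th \<and>
                        ctrans Th * Th = 1\<^sub>m M \<and> Th * ctrans Th = 1\<^sub>m M}"

definition fbar :: "nat \<Rightarrow> real \<Rightarrow> complex vec" where
  "fbar M phi = vec M (\<lambda>k. of_real (1 / sqrt (real M)) * cis (- pi * real k * sin phi))"

end

theory Submission
  imports Defs "Jordan_Normal_Form.Char_Poly"
begin


lemma ctrans_carrier[simp]: "A \<in> carrier_mat n m \<Longrightarrow> ctrans A \<in> carrier_mat m n"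
  by (auto simp: ctrans_def)
lemma ctrans_dim[simp]: "dim_row (ctrans A) = dim_col A" "dim_col (ctrans A) = dim_row A"
  by (auto simp: ctrans_def)
lemma ctrans_index[simp]: "i < dim_col A \<Longrightarrow> j < dim_row A \<Longrightarrow> ctrans A $$ (i,j) = cnj (A $$ (j,i))"
  by (auto simp: ctrans_def)
lemma ctrans_ctrans[simp]: "ctrans (ctrans A) = A"
  by (rule eq_matI, auto)

lemma ctrans_mult: assumes "A \<in> carrier_mat n k" "B \<in> carrier_mat k m"
  shows "ctrans (A * B) = ctrans B * ctrans A"
  using assms by (intro eq_matI) (auto simp: scalar_prod_def mult.commute)

lemma ctrans_add: assumes "A \<in> carrier_mat n m" "B \<in> carrier_mat n m"
  shows "ctrans (A + B) = ctrans A + ctrans B"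
  using assms by (intro eq_matI) auto

lemma ctrans_smult: "ctrans (a \<cdot>\<^sub>m A) = cnj a \<cdot>\<^sub>m ctrans A"
  by (intro eq_matI) auto

lemma ctrans_one[simp]: "ctrans (1\<^sub>m n) = 1\<^sub>m n"
  by (intro eq_matI) auto

lemma vh_cnj: assumes "x \<in> carrier_vec n" "y \<in> carrier_vec n"
  shows "vh y x = cnj (vh x y)"
  using assms by (simp add: vh_def mult.commute)

lemma adjoint: assumes A: "A \<in> carrier_mat n m" and x: "x \<in> carrier_vec n" and y: "y \<in> carrier_vec m"
  shows "vh x (A *\<^sub>v y) = vh (ctrans A *\<^sub>v x) y"
proof -
  have "vh x (A *\<^sub>v y) = (\<Sum>i<n. \<Sum>j<m. cnj (x $ i) * (A $$ (i,j) * y $ j))"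
    using assms by (simp add: vh_def scalar_prod_def sum_distrib_left lessThan_atLeast0)
  also have "\<dots> = (\<Sum>j<m. \<Sum>i<n. cnj (x $ i) * (A $$ (i,j) * y $ j))"
    by (rule sum.swap)
  also have "\<dots> = vh (ctrans A *\<^sub>v x) y"
    using assms by (simp add: vh_def scalar_prod_def sum_distrib_left lessThan_atLeast0 mult_ac)
  finally show ?thesis .
qed

lemma outer_carrier[simp]: "x \<in> carrier_vec n \<Longrightarrow> y \<in> carrier_vec m \<Longrightarrow> outer x y \<in> carrier_mat n m"
  by (auto simp: outer_def)
lemma outer_dim[simp]: "dim_row (outer x y) = dim_vec x" "dim_col (outer x y) = dim_vec y"
  by (auto simp: outer_def)
lemma outer_index[simp]: "i < dim_vec x \<Longrightarrow> j < dim_vec y \<Longrightarrow> outer x y $$ (i,j) = x $ i * cnj (y $ j)"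
  by (auto simp: outer_def)

lemma outer_mult_left: assumes "x \<in> carrier_vec n" "y \<in> carrier_vec k" "B \<in> carrier_mat k m"
  shows "outer x y * B = outer x (ctrans B *\<^sub>v y)"
  using assms by (intro eq_matI) (auto simp: scalar_prod_def sum_distrib_left mult_ac)

lemma outer_mult_right: assumes "x \<in> carrier_vec k" "y \<in> carrier_vec m" "B \<in> carrier_mat n k"
  shows "B * outer x y = outer (B *\<^sub>v x) y"
  using assms by (intro eq_matI) (auto simp: scalar_prod_def sum_distrib_left mult_ac)

lemma outer_outer: assumes "x \<in> carrier_vec n" "y \<in> carrier_vec k" "u \<in> carrier_vec k" "v \<in> carrier_vec m"
  shows "outer x y * outer u v = vh y u \<cdot>\<^sub>m outer x v"
  using assms by (intro eq_matI) (auto simp: scalar_prod_def vh_def sum_distrib_left sum_distrib_right lessThan_atLeast0 mult_ac)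

lemma ctrans_outer: "ctrans (outer x y) = outer y x"
  by (intro eq_matI) auto

lemma smult_outer: "a \<cdot>\<^sub>m outer x y = outer x (cnj a \<cdot>\<^sub>v y)"
  by (intro eq_matI) auto



lemma sylvester: fixes X Y :: "'a :: idom mat"
  assumes X: "X \<in> carrier_mat n k" and Y: "Y \<in> carrier_mat k n"
  shows "det (1\<^sub>m n + X * Y) = det (1\<^sub>m k + Y * X)"
proof -
  define P1 where "P1 = four_block_mat (1\<^sub>m n) (0\<^sub>m n k) (- Y) (1\<^sub>m k)"
  define P2 where "P2 = four_block_mat (1\<^sub>m n) X (0\<^sub>m k n) (1\<^sub>m k + Y * X)"
  define Q1 where "Q1 = four_block_mat (1\<^sub>m n + X * Y) X (0\<^sub>m k n) (1\<^sub>m k)"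
  define Q2 where "Q2 = P1"
  have e1: "(- Y) * X + 1\<^sub>m k * (1\<^sub>m k + Y * X) = 1\<^sub>m k"
    using X Y by (intro eq_matI) (auto simp: scalar_prod_def sum_negf)
  have e2: "(1\<^sub>m n + X * Y) * 1\<^sub>m n + X * (- Y) = 1\<^sub>m n"
    using X Y by (intro eq_matI) (auto simp: scalar_prod_def sum_negf)
  have "P1 * P2 = four_block_mat (1\<^sub>m n * 1\<^sub>m n + 0\<^sub>m n k * 0\<^sub>m k n) (1\<^sub>m n * X + 0\<^sub>m n k * (1\<^sub>m k + Y * X))
      ((- Y) * 1\<^sub>m n + 1\<^sub>m k * 0\<^sub>m k n) ((- Y) * X + 1\<^sub>m k * (1\<^sub>m k + Y * X))"
    unfolding P1_def P2_def using X Y by (intro mult_four_block_mat) auto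
  also have "\<dots> = four_block_mat (1\<^sub>m n) X (- Y) (1\<^sub>m k)"
    unfolding e1 using X Y by simp
  finally have PP: "P1 * P2 = four_block_mat (1\<^sub>m n) X (- Y) (1\<^sub>m k)" .
  have "Q1 * Q2 = four_block_mat ((1\<^sub>m n + X * Y) * 1\<^sub>m n + X * (- Y)) ((1\<^sub>m n + X * Y) * 0\<^sub>m n k + X * 1\<^sub>m k)
      (0\<^sub>m k n * 1\<^sub>m n + 1\<^sub>m k * (- Y)) (0\<^sub>m k n * 0\<^sub>m n k + 1\<^sub>m k * 1\<^sub>m k)"
    unfolding Q1_def Q2_def P1_def using X Y by (intro mult_four_block_mat) auto
  also have "\<dots> = four_block_mat (1\<^sub>m n) X (- Y) (1\<^sub>m k)"
    unfolding e2 using X Y by simp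
  finally have QQ: "Q1 * Q2 = four_block_mat (1\<^sub>m n) X (- Y) (1\<^sub>m k)" .
  have cP1: "P1 \<in> carrier_mat (n+k) (n+k)" unfolding P1_def using Y by auto
  have cP2: "P2 \<in> carrier_mat (n+k) (n+k)" unfolding P2_def using X Y by auto
  have cQ1: "Q1 \<in> carrier_mat (n+k) (n+k)" unfolding Q1_def using X Y by auto
  have dP1: "det P1 = 1" unfolding P1_def
    by (subst det_four_block_mat_upper_right_zero[of _ n _ k]) (use Y in auto)
  have dP2: "det P2 = det (1\<^sub>m k + Y * X)" unfolding P2_def
    by (subst det_four_block_mat_lower_left_zero[of _ n _ k]) (use X Y in auto)
  have dQ1: "det Q1 = det (1\<^sub>m n + X * Y)" unfolding Q1_def
    by (subst det_four_block_mat_lower_left_zero[of _ n _ k]) (use X Y in auto)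
  have "det (1\<^sub>m n + X * Y) = det (Q1 * Q2)" using det_mult[OF cQ1 cP1] dQ1 dP1 Q2_def by simp
  also have "\<dots> = det (P1 * P2)" using PP QQ by simp
  also have "\<dots> = det (1\<^sub>m k + Y * X)" using det_mult[OF cP1 cP2] dP1 dP2 by simp
  finally show ?thesis .
qed



lemma det2: assumes "A \<in> carrier_mat 2 2"
  shows "det A = A$$(0,0) * A$$(1,1) - A$$(0,1) * A$$(1,0)"
proof -
  have "det A = (\<Sum>j<2. A $$ (0, j) * cofactor A 0 j)"
    using laplace_expansion_row[OF assms, of 0] by simp
  also have "\<dots> = A$$(0,0) * A$$(1,1) - A$$(0,1) * A$$(1,0)"
    using assms by (simp add: cofactor_def det_def numeral_2_eq_2 mat_delete_def)
  finally show ?thesis .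
qed

lemma det_rank2:
  assumes A: "A \<in> carrier_mat n n" and Ai: "Ai \<in> carrier_mat n n" and AAi: "A * Ai = 1\<^sub>m n"
    and a1: "a1 \<in> carrier_vec n" and a2: "a2 \<in> carrier_vec n"
    and b1: "b1 \<in> carrier_vec n" and b2: "b2 \<in> carrier_vec n"
  shows "det (A + outer a1 b1 + outer a2 b2) = det A *
     ((1 + vh b1 (Ai *\<^sub>v a1)) * (1 + vh b2 (Ai *\<^sub>v a2)) - vh b1 (Ai *\<^sub>v a2) * vh b2 (Ai *\<^sub>v a1))"
proof -
  define X where "X = mat n 2 (\<lambda>(i,j). (if j = 0 then Ai *\<^sub>v a1 else Ai *\<^sub>v a2) $ i)"
  define Y where "Y = mat 2 n (\<lambda>(i,j). cnj ((if i = 0 then b1 else b2) $ j))"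
  have X: "X \<in> carrier_mat n 2" and Y: "Y \<in> carrier_mat 2 n" unfolding X_def Y_def by auto
  have XY: "X * Y = outer (Ai *\<^sub>v a1) b1 + outer (Ai *\<^sub>v a2) b2"
    using Ai a1 a2 b1 b2 unfolding X_def Y_def
    by (intro eq_matI) (auto simp: scalar_prod_def numeral_2_eq_2)
  have "A * (1\<^sub>m n + X * Y) = A * 1\<^sub>m n + A * (X * Y)"
    using A X Y by (intro mult_add_distrib_mat) auto
  also have "A * (X * Y) = A * outer (Ai *\<^sub>v a1) b1 + A * outer (Ai *\<^sub>v a2) b2"
    unfolding XY using A Ai a1 a2 b1 b2 by (intro mult_add_distrib_mat) auto
  also have "A * outer (Ai *\<^sub>v a1) b1 = outer a1 b1"
    using A Ai a1 b1 AAi by (subst outer_mult_right[of _ n _ n]) (auto simp: assoc_mult_mat_vec[symmetric])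
  also have "A * outer (Ai *\<^sub>v a2) b2 = outer a2 b2"
    using A Ai a2 b2 AAi by (subst outer_mult_right[of _ n _ n]) (auto simp: assoc_mult_mat_vec[symmetric])
  finally have eq: "A * (1\<^sub>m n + X * Y) = A + outer a1 b1 + outer a2 b2"
    using A a1 a2 b1 b2 by (simp add: assoc_add_mat)
  have "det (A + outer a1 b1 + outer a2 b2) = det A * det (1\<^sub>m n + X * Y)"
    unfolding eq[symmetric] using A X Y by (intro det_mult) auto
  also have "det (1\<^sub>m n + X * Y) = det (1\<^sub>m 2 + Y * X)" by (rule sylvester[OF X Y])
  also have "\<dots> = (1\<^sub>m 2 + Y * X)$$(0,0) * (1\<^sub>m 2 + Y * X)$$(1,1) - (1\<^sub>m 2 + Y * X)$$(0,1) * (1\<^sub>m 2 + Y * X)$$(1,0)"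
    using X Y by (intro det2) auto
  also have "\<dots> = (1 + vh b1 (Ai *\<^sub>v a1)) * (1 + vh b2 (Ai *\<^sub>v a2)) - vh b1 (Ai *\<^sub>v a2) * vh b2 (Ai *\<^sub>v a1)"
    using X Y Ai a1 a2 b1 b2 unfolding X_def Y_def
    by (simp add: scalar_prod_def vh_def lessThan_atLeast0)
  finally show ?thesis .
qed



lemma vh_self: "x \<in> carrier_vec n \<Longrightarrow> vh x x = of_real (\<Sum>i<n. (cmod (x $ i))^2)"
  unfolding vh_def of_real_sum
proof (rule sum.cong)
  fix i show "cnj (x $ i) * x $ i = of_real ((cmod (x $ i))^2)"
    by (subst complex_norm_square) (simp add: mult.commute)
qed auto

lemma vh_self_pos: assumes "x \<in> carrier_vec n" "x \<noteq> 0\<^sub>v n"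
  shows "(\<Sum>i<n. (cmod (x $ i))^2) > 0"
proof -
  from assms obtain i where i: "i < n" "x $ i \<noteq> 0" by (metis eq_vecI carrier_vecD index_zero_vec)
  have "(cmod (x $ i))^2 \<le> (\<Sum>i<n. (cmod (x $ i))^2)"
    using i by (intro member_le_sum) auto
  moreover have "(cmod (x $ i))^2 > 0" using i by simp
  ultimately show ?thesis by linarith
qed

lemma prod_list_pos: "(\<forall>a\<in>set as. Im a = 0 \<and> Re a > 0) \<Longrightarrow> Im (prod_list as) = 0 \<and> Re (prod_list as) > 0"
  by (induction as) auto

lemma poly_prod_lin0: "poly (\<Prod>a\<leftarrow>as. [:- a, 1:]) 0 = (-1)^length as * prod_list (as :: complex list)"
  by (induction as) (auto simp: poly_prod_list)

lemma det_pd_pos: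
  assumes M: "M \<in> carrier_mat n n" and herm: "ctrans M = M"
    and pd: "\<And>x. x \<in> carrier_vec n \<Longrightarrow> x \<noteq> 0\<^sub>v n \<Longrightarrow> Re (vh x (M *\<^sub>v x)) > 0"
  shows "Im (det M) = 0 \<and> Re (det M) > 0"
proof -
  obtain as where cp: "char_poly M = (\<Prod>a\<leftarrow>as. [:- a, 1:])" and len: "length as = n"
    using char_poly_factorized[OF M] by blast
  have cm: "char_matrix M 0 = M" using M unfolding char_matrix_def by (intro eq_matI) auto
  have mM: "- M = (-1) \<cdot>\<^sub>m M" by (intro eq_matI) auto
  have "poly (char_poly M) 0 = (-1)^n * det M"
    unfolding char_poly_matrix[OF M] cm mM using M by simp
  hence "(-1)^n * det M = (-1)^n * prod_list as" unfolding cp poly_prod_lin0 len by simp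
  hence dM: "det M = prod_list as" by simp
  have "Im a = 0 \<and> Re a > 0" if a: "a \<in> set as" for a
  proof -
    have "poly (char_poly M) a = 0" unfolding cp using a
      by (induction as) (auto simp: poly_prod_list)
    hence "eigenvalue M a" using eigenvalue_root_char_poly[OF M] by simp
    then obtain v where v: "v \<in> carrier_vec n" "v \<noteq> 0\<^sub>v n" "M *\<^sub>v v = a \<cdot>\<^sub>v v"
      unfolding eigenvalue_def eigenvector_def using M by auto
    define s where "s = (\<Sum>i<n. (cmod (v $ i))^2)"
    have s: "s > 0" unfolding s_def using vh_self_pos[OF v(1,2)] .
    have e1: "vh v (M *\<^sub>v v) = a * of_real s"
    proof -
      have "vh v (a \<cdot>\<^sub>v v) = a * vh v v" using v(1) by (simp add: vh_def sum_distrib_left mult_ac)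
      thus ?thesis unfolding v(3) s_def vh_self[OF v(1)] .
    qed
    have "vh v (M *\<^sub>v v) = vh (M *\<^sub>v v) v"
      using adjoint[OF M v(1) v(1)] herm by simp
    also have "\<dots> = cnj (vh v (M *\<^sub>v v))" using vh_cnj[of v n "M *\<^sub>v v"] v M by auto
    finally have h: "vh v (M *\<^sub>v v) = cnj (vh v (M *\<^sub>v v))" .
    have "Im (vh v (M *\<^sub>v v)) = 0" using arg_cong[OF h, of Im] by simp
    moreover have "Re (vh v (M *\<^sub>v v)) > 0" using pd[OF v(1,2)] by blast
    ultimately show ?thesis using e1 s by (auto simp: zero_less_mult_iff)
  qed
  thus ?thesis unfolding dM using prod_list_pos by blast
qed



lemma vh_add: "x \<in> carrier_vec n \<Longrightarrow> y \<in> carrier_vec n \<Longrightarrow> z \<in> carrier_vec n \<Longrightarrow> vh x (y + z) = vh x y + vh x z"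
  by (simp add: vh_def sum.distrib algebra_simps)
lemma vh_smult: "x \<in> carrier_vec n \<Longrightarrow> y \<in> carrier_vec n \<Longrightarrow> vh x (k \<cdot>\<^sub>v y) = k * vh x y"
  by (simp add: vh_def sum_distrib_left mult_ac)
lemma vh_smult_left: "x \<in> carrier_vec n \<Longrightarrow> y \<in> carrier_vec n \<Longrightarrow> vh (k \<cdot>\<^sub>v x) y = cnj k * vh x y"
  by (simp add: vh_def sum_distrib_left mult_ac)
lemma vh_add_left: "x \<in> carrier_vec n \<Longrightarrow> y \<in> carrier_vec n \<Longrightarrow> z \<in> carrier_vec n \<Longrightarrow> vh (x + y) z = vh x z + vh y z"
  by (simp add: vh_def sum.distrib algebra_simps)

lemma smult_mat_vec: "B \<in> carrier_mat n m \<Longrightarrow> x \<in> carrier_vec m \<Longrightarrow> (k \<cdot>\<^sub>m B) *\<^sub>v x = k \<cdot>\<^sub>v (B *\<^sub>v x)"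
  by (intro eq_vecI) (auto simp: scalar_prod_def sum_distrib_left mult_ac)

lemma K_herm: assumes H: "H \<in> carrier_mat n m" and R: "herm_psd m R"
  shows "ctrans (1\<^sub>m n + of_real k \<cdot>\<^sub>m (H * R * ctrans H)) = 1\<^sub>m n + of_real k \<cdot>\<^sub>m (H * R * ctrans H)"
proof -
  have Rc: "R \<in> carrier_mat m m" and Rh: "ctrans R = R" using R unfolding herm_psd_def by auto
  have "ctrans (H * R * ctrans H) = ctrans (ctrans H) * ctrans (H * R)"
    using H Rc by (intro ctrans_mult[of _ n m]) auto
  also have "\<dots> = H * (R * ctrans H)" using H Rc Rh by (simp add: ctrans_mult[of _ n m _ m])
  also have "\<dots> = H * R * ctrans H" using H Rc by (simp add: assoc_mult_mat[of _ n m _ m _ n])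
  finally have e: "ctrans (H * R * ctrans H) = H * R * ctrans H" .
  have "ctrans (1\<^sub>m n + of_real k \<cdot>\<^sub>m (H * R * ctrans H)) = ctrans (1\<^sub>m n) + ctrans (of_real k \<cdot>\<^sub>m (H * R * ctrans H))"
    using H Rc by (intro ctrans_add[of _ n n]) auto
  also have "\<dots> = 1\<^sub>m n + of_real k \<cdot>\<^sub>m (H * R * ctrans H)" unfolding ctrans_smult e by simp
  finally show ?thesis .
qed

lemma K_pd: assumes H: "H \<in> carrier_mat n m" and R: "herm_psd m R" and k: "k > 0"
  and x: "x \<in> carrier_vec n" "x \<noteq> 0\<^sub>v n"
  shows "Re (vh x ((1\<^sub>m n + of_real k \<cdot>\<^sub>m (H * R * ctrans H)) *\<^sub>v x)) > 0"
proof -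
  have Rc: "R \<in> carrier_mat m m" using R unfolding herm_psd_def by auto
  define y where "y = ctrans H *\<^sub>v x"
  have y: "y \<in> carrier_vec m" unfolding y_def by (rule mult_mat_vec_carrier[OF ctrans_carrier[OF H] x(1)])
  have B: "H * R * ctrans H \<in> carrier_mat n n" by (rule mult_carrier_mat[OF mult_carrier_mat[OF H Rc] ctrans_carrier[OF H]])
  have e1: "(1\<^sub>m n + of_real k \<cdot>\<^sub>m (H * R * ctrans H)) *\<^sub>v x = 1\<^sub>m n *\<^sub>v x + (of_real k \<cdot>\<^sub>m (H * R * ctrans H)) *\<^sub>v x"
    using B x by (intro add_mult_distrib_mat_vec) auto
  have e2: "(of_real k \<cdot>\<^sub>m (H * R * ctrans H)) *\<^sub>v x = of_real k \<cdot>\<^sub>v ((H * R * ctrans H) *\<^sub>v x)"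
    using B x by (intro smult_mat_vec) auto
  have e3: "(H * R * ctrans H) *\<^sub>v x = (H * R) *\<^sub>v y"
    unfolding y_def by (rule assoc_mult_mat_vec[OF mult_carrier_mat[OF H Rc] ctrans_carrier[OF H] x(1)])
  have e4: "(H * R) *\<^sub>v y = H *\<^sub>v (R *\<^sub>v y)"
    by (rule assoc_mult_mat_vec[OF H Rc y])
  have Ry: "R *\<^sub>v y \<in> carrier_vec m" by (rule mult_mat_vec_carrier[OF Rc y])
  have HRy: "H *\<^sub>v (R *\<^sub>v y) \<in> carrier_vec n" by (rule mult_mat_vec_carrier[OF H Ry])
  have "vh x ((1\<^sub>m n + of_real k \<cdot>\<^sub>m (H * R * ctrans H)) *\<^sub>v x) = vh x (x + of_real k \<cdot>\<^sub>v (H *\<^sub>v (R *\<^sub>v y)))"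
    unfolding e1 e2 e3 e4 using x by simp
  also have "\<dots> = vh x x + of_real k * vh x (H *\<^sub>v (R *\<^sub>v y))"
    using x HRy by (simp add: vh_add[of _ n] vh_smult[of _ n])
  also have "vh x (H *\<^sub>v (R *\<^sub>v y)) = vh y (R *\<^sub>v y)"
    using adjoint[OF H x(1) Ry] unfolding y_def by simp
  finally have "vh x ((1\<^sub>m n + of_real k \<cdot>\<^sub>m (H * R * ctrans H)) *\<^sub>v x) = vh x x + of_real k * vh y (R *\<^sub>v y)" .
  moreover have "Re (vh y (R *\<^sub>v y)) \<ge> 0" using R y unfolding herm_psd_def by auto
  moreover have "Re (vh x x) > 0" using vh_self[OF x(1)] vh_self_pos[OF x] by simp
  ultimately show ?thesis using k by (auto intro!: add_pos_nonneg mult_nonneg_nonneg)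
qed



lemma prod_expand:
  assumes Hd: "Hd \<in> carrier_mat nr nt" and R: "R \<in> carrier_mat nt nt" and fa: "fa \<in> carrier_vec nr"
    and v1: "v1 \<in> carrier_vec nt" and gd: "gd \<in> carrier_vec nt" and v2: "v2 \<in> carrier_vec nr"
  shows "(Hd * R + outer fa v1) * (ctrans Hd + outer gd v2) =
     Hd * R * ctrans Hd + outer fa (Hd *\<^sub>v v1) + (outer ((Hd * R) *\<^sub>v gd) v2 + vh v1 gd \<cdot>\<^sub>m outer fa v2)"
proof -
  have HR: "Hd * R \<in> carrier_mat nr nt" using Hd R by simp
  have cH: "ctrans Hd \<in> carrier_mat nt nr" using Hd by simp
  have o1: "outer fa v1 \<in> carrier_mat nr nt" using fa v1 by simp
  have o2: "outer gd v2 \<in> carrier_mat nt nr" using gd v2 by simp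
  have "(Hd * R + outer fa v1) * (ctrans Hd + outer gd v2) =
        (Hd * R + outer fa v1) * ctrans Hd + (Hd * R + outer fa v1) * outer gd v2"
    by (rule mult_add_distrib_mat[of _ nr nt]) (use HR o1 cH o2 in auto)
  also have "(Hd * R + outer fa v1) * ctrans Hd = Hd * R * ctrans Hd + outer fa v1 * ctrans Hd"
    by (rule add_mult_distrib_mat[of _ nr nt]) (use HR o1 cH in auto)
  also have "(Hd * R + outer fa v1) * outer gd v2 = Hd * R * outer gd v2 + outer fa v1 * outer gd v2"
    by (rule add_mult_distrib_mat[of _ nr nt]) (use HR o1 o2 in auto)
  also have "outer fa v1 * ctrans Hd = outer fa (Hd *\<^sub>v v1)"
    using outer_mult_left[OF fa v1 cH] by simp
  also have "Hd * R * outer gd v2 = outer ((Hd * R) *\<^sub>v gd) v2"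
    by (rule outer_mult_right[OF gd v2 HR])
  also have "outer fa v1 * outer gd v2 = vh v1 gd \<cdot>\<^sub>m outer fa v2"
    by (rule outer_outer[OF fa v1 gd v2])
  finally show ?thesis .
qed

lemma K_expand:
  assumes Hd: "Hd \<in> carrier_mat nr nt" and R: "R \<in> carrier_mat nt nt" and Rh: "ctrans R = R"
    and fa: "fa \<in> carrier_vec nr" and gd: "gd \<in> carrier_vec nt"
  shows "1\<^sub>m nr + of_real k \<cdot>\<^sub>m ((Hd + c \<cdot>\<^sub>m outer fa gd) * R * ctrans (Hd + c \<cdot>\<^sub>m outer fa gd))
    = (1\<^sub>m nr + of_real k \<cdot>\<^sub>m (Hd * R * ctrans Hd))
      + outer fa (of_real k \<cdot>\<^sub>v (cnj c \<cdot>\<^sub>v (Hd *\<^sub>v (R *\<^sub>v gd)) + (cnj (c * vh (R *\<^sub>v gd) gd) * c) \<cdot>\<^sub>v fa))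
      + outer (Hd *\<^sub>v (R *\<^sub>v gd)) (of_real k \<cdot>\<^sub>v (c \<cdot>\<^sub>v fa))"
proof -
  define u where "u = R *\<^sub>v gd"
  have u: "u \<in> carrier_vec nt" unfolding u_def by (rule mult_mat_vec_carrier[OF R gd])
  have F: "outer fa gd \<in> carrier_mat nr nt" using fa gd by simp
  have cF: "c \<cdot>\<^sub>m outer fa gd \<in> carrier_mat nr nt" using F by simp
  have a: "(Hd + c \<cdot>\<^sub>m outer fa gd) * R = Hd * R + outer fa (cnj c \<cdot>\<^sub>v u)"
  proof -
    have "(Hd + c \<cdot>\<^sub>m outer fa gd) * R = Hd * R + (c \<cdot>\<^sub>m outer fa gd) * R"
      by (rule add_mult_distrib_mat[OF Hd cF R])
    also have "(c \<cdot>\<^sub>m outer fa gd) * R = c \<cdot>\<^sub>m (outer fa gd * R)"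
      by (rule mult_smult_assoc_mat[OF F R])
    also have "outer fa gd * R = outer fa u"
      unfolding u_def using outer_mult_left[OF fa gd R] Rh by simp
    finally show ?thesis by (simp add: smult_outer)
  qed
  have b: "ctrans (Hd + c \<cdot>\<^sub>m outer fa gd) = ctrans Hd + outer gd (c \<cdot>\<^sub>v fa)"
    by (rule eq_matI) (use Hd fa gd in \<open>auto simp: mult_ac\<close>)
  have "(Hd + c \<cdot>\<^sub>m outer fa gd) * R * ctrans (Hd + c \<cdot>\<^sub>m outer fa gd)
     = Hd * R * ctrans Hd + outer fa (Hd *\<^sub>v (cnj c \<cdot>\<^sub>v u)) + (outer ((Hd * R) *\<^sub>v gd) (c \<cdot>\<^sub>v fa) + vh (cnj c \<cdot>\<^sub>v u) gd \<cdot>\<^sub>m outer fa (c \<cdot>\<^sub>v fa))"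
    unfolding a b by (rule prod_expand[OF Hd R fa _ gd]) (use u fa in auto)
  also have "Hd *\<^sub>v (cnj c \<cdot>\<^sub>v u) = cnj c \<cdot>\<^sub>v (Hd *\<^sub>v u)" by (rule mult_mat_vec[OF Hd u])
  also have "(Hd * R) *\<^sub>v gd = Hd *\<^sub>v u" unfolding u_def by (rule assoc_mult_mat_vec[OF Hd R gd])
  also have "vh (cnj c \<cdot>\<^sub>v u) gd = c * vh u gd" using vh_smult_left[OF u gd] by simp
  finally have e: "(Hd + c \<cdot>\<^sub>m outer fa gd) * R * ctrans (Hd + c \<cdot>\<^sub>m outer fa gd)
     = Hd * R * ctrans Hd + outer fa (cnj c \<cdot>\<^sub>v (Hd *\<^sub>v u)) + (outer (Hd *\<^sub>v u) (c \<cdot>\<^sub>v fa) + (c * vh u gd) \<cdot>\<^sub>m outer fa (c \<cdot>\<^sub>v fa))" .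
  have HRH: "Hd * R * ctrans Hd \<in> carrier_mat nr nr" by (rule mult_carrier_mat[OF mult_carrier_mat[OF Hd R] ctrans_carrier[OF Hd]])
  have Hu: "Hd *\<^sub>v u \<in> carrier_vec nr" by (rule mult_mat_vec_carrier[OF Hd u])
  show ?thesis unfolding e u_def[symmetric]
    by (rule eq_matI) (use HRH Hu fa in \<open>auto simp: algebra_simps\<close>)
qed



lemma cis_Arg_mult: "cis (- Arg a) * a = of_real (cmod a)"
proof -
  have "cis (- Arg a) * a = cis (- Arg a) * (of_real (cmod a) * cis (Arg a))"
    by (subst rcis_cmod_Arg[symmetric]) (simp add: rcis_def)
  also have "\<dots> = of_real (cmod a) * (cis (- Arg a) * cis (Arg a))" by (simp add: mult_ac)
  also have "cis (- Arg a) * cis (Arg a) = 1" by (simp add: cis_mult)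
  finally show ?thesis by simp
qed

lemma quad_max: fixes a c c0 :: complex and k kap :: real
  assumes pos: "\<And>c. 0 < 1 + 2*k*Re(c*a) + (cmod c)^2*kap" and k: "k \<ge> 0"
    and le: "cmod c \<le> cmod c0" and al: "Re(c0*a) = cmod c0 * cmod a"
  shows "1 + 2*k*Re(c*a) + (cmod c)^2*kap \<le> 1 + 2*k*Re(c0*a) + (cmod c0)^2*kap"
proof -
  have kap: "kap \<ge> 0"
  proof (rule ccontr)
    assume "\<not> kap \<ge> 0"
    hence kn: "kap < 0" by simp
    define t where "t = sqrt (- 1 / kap)"
    have t: "t \<ge> 0" "t^2 = - 1 / kap" unfolding t_def using kn by auto
    define c1 where "c1 = - of_real t * cis (- Arg a)"
    have "c1 * a = - of_real t * (cis (- Arg a) * a)" unfolding c1_def by (simp add: mult_ac)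
    hence re: "Re (c1 * a) = - t * cmod a" by (simp add: cis_Arg_mult)
    have cm: "cmod c1 = t" unfolding c1_def using t by (simp add: norm_mult)
    have "0 < 1 + 2*k*(- t * cmod a) + t^2*kap" using pos[of c1] re cm by simp
    also have "t^2 * kap = -1" using t kn by (simp add: field_simps)
    finally have "0 < 2*k*(- t * cmod a)" by simp
    moreover have "2*k*(t * cmod a) \<ge> 0" using k t by simp
    ultimately show False by simp
  qed
  have "Re (c*a) \<le> cmod (c*a)" by (rule complex_Re_le_cmod)
  also have "\<dots> = cmod c * cmod a" by (simp add: norm_mult)
  also have "\<dots> \<le> cmod c0 * cmod a" using le by (simp add: mult_right_mono)
  finally have r: "Re (c*a) \<le> Re (c0*a)" using al by simp
  have "(cmod c)^2 \<le> (cmod c0)^2" using le by (simp add: power_mono)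
  hence "(cmod c)^2 * kap \<le> (cmod c0)^2 * kap" using kap by (simp add: mult_right_mono)
  moreover have "2*k*Re(c*a) \<le> 2*k*Re(c0*a)" using r k by (simp add: mult_left_mono)
  ultimately show ?thesis by simp
qed



lemma minv_props: assumes A: "A \<in> carrier_mat n n" and dA: "det A \<noteq> 0"
  shows "minv A \<in> carrier_mat n n \<and> A * minv A = 1\<^sub>m n \<and> minv A * A = 1\<^sub>m n"
proof -
  have "A \<in> Units (ring_mat TYPE(complex) n ())" by (rule det_non_zero_imp_unit[OF A dA])
  hence ex: "\<exists>B. B \<in> carrier_mat n n \<and> A * B = 1\<^sub>m n \<and> B * A = 1\<^sub>m n"
    unfolding Units_def ring_mat_def by auto
  have dr: "dim_row A = n" using A by simp
  show ?thesis unfolding minv_def dr by (rule someI_ex[OF ex])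
qed

lemma minv_herm: assumes A: "A \<in> carrier_mat n n" and dA: "det A \<noteq> 0" and h: "ctrans A = A"
  shows "ctrans (minv A) = minv A"
proof -
  note p = minv_props[OF A dA]
  have B: "minv A \<in> carrier_mat n n" using p by simp
  have "ctrans (A * minv A) = ctrans (minv A) * ctrans A" by (rule ctrans_mult[OF A B])
  hence l: "ctrans (minv A) * A = 1\<^sub>m n" using p h by simp
  have cB: "ctrans (minv A) \<in> carrier_mat n n" using B by simp
  have "ctrans (minv A) = ctrans (minv A) * (A * minv A)" using p right_mult_one_mat[OF cB] by simp
  also have "\<dots> = (ctrans (minv A) * A) * minv A" by (rule assoc_mult_mat[OF cB A B, symmetric])
  also have "\<dots> = minv A" using l B by simp
  finally show ?thesis .
qed



lemma core:
  assumes Hd: "Hd \<in> carrier_mat NR NT" and fa: "fa \<in> carrier_vec NR" and gd: "gd \<in> carrier_vec NT"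
    and R: "herm_psd NT R" and s2: "s2 > 0"
    and Adef: "A = 1\<^sub>m NR + of_real (1 / s2) \<cdot>\<^sub>m (Hd * R * ctrans Hd)"
    and aldef: "alpha = vh gd ((R * ctrans Hd * minv A) *\<^sub>v fa)"
    and le: "cmod c \<le> cmod c0" and al: "Re (c0 * alpha) = cmod c0 * cmod alpha"
  shows "rate s2 R (Hd + c \<cdot>\<^sub>m outer fa gd) \<le> rate s2 R (Hd + c0 \<cdot>\<^sub>m outer fa gd)"
proof -
  define k where "k = 1 / s2"
  have k: "k > 0" unfolding k_def using s2 by simp
  have Rc: "R \<in> carrier_mat NT NT" and Rh: "ctrans R = R" using R unfolding herm_psd_def by auto
  define K where "K c = 1\<^sub>m NR + of_real k \<cdot>\<^sub>m ((Hd + c \<cdot>\<^sub>m outer fa gd) * R * ctrans (Hd + c \<cdot>\<^sub>m outer fa gd))" for c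
  have Hc: "Hd + c \<cdot>\<^sub>m outer fa gd \<in> carrier_mat NR NT" for c using Hd fa gd by simp
  have Kc: "K c \<in> carrier_mat NR NR" for c
    unfolding K_def using mult_carrier_mat[OF mult_carrier_mat[OF Hc Rc] ctrans_carrier[OF Hc]] by simp
  have Kpos: "Im (det (K c)) = 0 \<and> Re (det (K c)) > 0" for c
    by (rule det_pd_pos[OF Kc]) (unfold K_def, rule K_herm[OF Hc R], rule K_pd[OF Hc R k])
  have rateK: "rate s2 R (Hd + c \<cdot>\<^sub>m outer fa gd) = ln (Re (det (K c)))" for c
    unfolding rate_def K_def k_def using Hc[of c] fa by simp
  have A: "A \<in> carrier_mat NR NR" unfolding Adef
    using mult_carrier_mat[OF mult_carrier_mat[OF Hd Rc] ctrans_carrier[OF Hd]] by simp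
  have Apos: "Im (det A) = 0 \<and> Re (det A) > 0"
    by (rule det_pd_pos[OF A]) (unfold Adef k_def[symmetric], rule K_herm[OF Hd R], rule K_pd[OF Hd R k])
  have dA: "det A \<noteq> 0" using Apos by auto
  have Ah: "ctrans A = A" unfolding Adef k_def[symmetric] by (rule K_herm[OF Hd R])
  define Ai where "Ai = minv A"
  have Ai: "Ai \<in> carrier_mat NR NR" and AAi: "A * Ai = 1\<^sub>m NR" using minv_props[OF A dA] unfolding Ai_def by auto
  have Aih: "ctrans Ai = Ai" unfolding Ai_def by (rule minv_herm[OF A dA Ah])
  define u where "u = R *\<^sub>v gd"
  have u: "u \<in> carrier_vec NT" unfolding u_def by (rule mult_mat_vec_carrier[OF Rc gd])
  define w where "w = Hd *\<^sub>v u"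
  have w: "w \<in> carrier_vec NR" unfolding w_def by (rule mult_mat_vec_carrier[OF Hd u])
  define q where "q = vh u gd"
  define G11 where "G11 = vh fa (Ai *\<^sub>v fa)"
  define G12 where "G12 = vh fa (Ai *\<^sub>v w)"
  define G21 where "G21 = vh w (Ai *\<^sub>v fa)"
  define G22 where "G22 = vh w (Ai *\<^sub>v w)"
  have Aifa: "Ai *\<^sub>v fa \<in> carrier_vec NR" by (rule mult_mat_vec_carrier[OF Ai fa])
  have Aiw: "Ai *\<^sub>v w \<in> carrier_vec NR" by (rule mult_mat_vec_carrier[OF Ai w])
  have G12: "G12 = cnj G21"
  proof -
    have "G12 = vh (ctrans Ai *\<^sub>v fa) w" unfolding G12_def by (rule adjoint[OF Ai fa w])
    also have "\<dots> = vh (Ai *\<^sub>v fa) w" using Aih by simp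
    also have "\<dots> = cnj G21" unfolding G21_def by (rule vh_cnj[OF w Aifa])
    finally show ?thesis .
  qed
  have alpha: "alpha = G21"
  proof -
    have cH: "ctrans Hd \<in> carrier_mat NT NR" using Hd by simp
    have y: "ctrans Hd *\<^sub>v (Ai *\<^sub>v fa) \<in> carrier_vec NT" by (rule mult_mat_vec_carrier[OF cH Aifa])
    have "(R * ctrans Hd * Ai) *\<^sub>v fa = (R * ctrans Hd) *\<^sub>v (Ai *\<^sub>v fa)"
      by (rule assoc_mult_mat_vec[OF mult_carrier_mat[OF Rc cH] Ai fa])
    also have "\<dots> = R *\<^sub>v (ctrans Hd *\<^sub>v (Ai *\<^sub>v fa))" by (rule assoc_mult_mat_vec[OF Rc cH Aifa])
    finally have e: "(R * ctrans Hd * Ai) *\<^sub>v fa = R *\<^sub>v (ctrans Hd *\<^sub>v (Ai *\<^sub>v fa))" .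
    have "alpha = vh (ctrans R *\<^sub>v gd) (ctrans Hd *\<^sub>v (Ai *\<^sub>v fa))"
      unfolding aldef Ai_def[symmetric] e by (rule adjoint[OF Rc gd y])
    also have "\<dots> = vh u (ctrans Hd *\<^sub>v (Ai *\<^sub>v fa))" using Rh u_def by simp
    also have "\<dots> = vh (ctrans (ctrans Hd) *\<^sub>v u) (Ai *\<^sub>v fa)" by (rule adjoint[OF cH u Aifa])
    also have "\<dots> = G21" unfolding G21_def w_def by simp
    finally show ?thesis .
  qed
  define kap where "kap = Re (of_real k * q * G11 + (of_real k)^2 * (G21 * G12 - G22 * G11))"
  define P where "P c = 1 + 2*k*Re(c*alpha) + (cmod c)^2*kap" for c
  have detK: "Re (det (K c)) = Re (det A) * P c" for c
  proof -
    define b1 where "b1 = of_real k \<cdot>\<^sub>v (cnj c \<cdot>\<^sub>v w + (cnj (c * q) * c) \<cdot>\<^sub>v fa)"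
    define b2 where "b2 = of_real k \<cdot>\<^sub>v (c \<cdot>\<^sub>v fa)"
    have b1: "b1 \<in> carrier_vec NR" unfolding b1_def using w fa by simp
    have b2: "b2 \<in> carrier_vec NR" unfolding b2_def using fa by simp
    have "K c = A + outer fa b1 + outer w b2"
      unfolding K_def Adef b1_def b2_def w_def q_def u_def k_def
      by (rule K_expand[OF Hd Rc Rh fa gd])
    hence "det (K c) = det A * ((1 + vh b1 (Ai *\<^sub>v fa)) * (1 + vh b2 (Ai *\<^sub>v w)) - vh b1 (Ai *\<^sub>v w) * vh b2 (Ai *\<^sub>v fa))"
      using det_rank2[OF A Ai AAi fa w b1 b2] by simp
    also have "vh b1 (Ai *\<^sub>v fa) = of_real k * (c * G21 + c * q * cnj c * G11)"
      unfolding b1_def G21_def G11_def using w fa Aifa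
      by (simp add: vh_smult_left[of _ NR] vh_add_left[of _ NR])
    also have "vh b1 (Ai *\<^sub>v w) = of_real k * (c * G22 + c * q * cnj c * G12)"
      unfolding b1_def G22_def G12_def using w fa Aiw
      by (simp add: vh_smult_left[of _ NR] vh_add_left[of _ NR])
    also have "vh b2 (Ai *\<^sub>v w) = of_real k * cnj c * G12"
      unfolding b2_def G12_def using fa Aiw by (simp add: vh_smult_left[of _ NR])
    also have "vh b2 (Ai *\<^sub>v fa) = of_real k * cnj c * G11"
      unfolding b2_def G11_def using fa Aifa by (simp add: vh_smult_left[of _ NR])
    finally have "det (K c) = det A * (1 + of_real k * (c * G21 + cnj c * G12)
        + (c * cnj c) * (of_real k * q * G11 + (of_real k)^2 * (G21 * G12 - G22 * G11)))"
      by (simp add: algebra_simps power2_eq_square)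
    also have "c * cnj c = of_real ((cmod c)^2)" by (rule complex_norm_square[symmetric])
    finally have e: "det (K c) = det A * (1 + of_real k * (c * G21 + cnj (c * G21))
        + of_real ((cmod c)^2) * (of_real k * q * G11 + (of_real k)^2 * (G21 * G12 - G22 * G11)))"
      unfolding G12 by simp
    show ?thesis unfolding e P_def kap_def alpha using Apos by simp
  qed
  have Ppos: "P c > 0" for c
  proof -
    have "Re (det A) * P c > 0" using Kpos[of c] detK[of c] by simp
    thus ?thesis using Apos by (simp add: zero_less_mult_iff)
  qed
  have "P c \<le> P c0" unfolding P_def
    by (rule quad_max[OF _ _ le al]) (use Ppos k in \<open>auto simp: P_def\<close>)
  hence "Re (det (K c)) \<le> Re (det (K c0))" unfolding detK using Apos by (simp add: mult_left_mono)
  thus ?thesis unfolding rateK using Kpos by simp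
qed



lemma cs_real: fixes a b :: "nat \<Rightarrow> real" assumes fin: "finite I"
  shows "(\<Sum>i\<in>I. a i * b i)^2 \<le> (\<Sum>i\<in>I. (a i)^2) * (\<Sum>i\<in>I. (b i)^2)"
proof (cases "(\<Sum>i\<in>I. (b i)^2) = 0")
  case True
  hence "\<forall>i\<in>I. (b i)^2 = 0" using fin by (subst (asm) sum_nonneg_eq_0_iff) auto
  hence "\<forall>i\<in>I. b i = 0" by simp
  thus ?thesis by simp
next
  case False
  define B where "B = (\<Sum>i\<in>I. (b i)^2)"
  define A where "A = (\<Sum>i\<in>I. (a i)^2)"
  define C where "C = (\<Sum>i\<in>I. a i * b i)"
  have Bp: "B > 0" using False unfolding B_def by (metis sum_nonneg zero_le_power2 order_le_less)
  define t where "t = C / B"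
  have "0 \<le> (\<Sum>i\<in>I. (a i - t * b i)^2)" by (simp add: sum_nonneg)
  also have "\<dots> = A - 2 * t * C + t^2 * B"
    unfolding A_def B_def C_def
    by (simp add: power2_eq_square algebra_simps sum_distrib_left sum.distrib sum_subtractf)
  also have "\<dots> = A - C^2 / B" unfolding t_def using Bp by (simp add: field_simps power2_eq_square)
  finally have "C^2 / B \<le> A" by simp
  hence "C^2 \<le> A * B" using Bp by (simp add: field_simps)
  thus ?thesis unfolding A_def B_def C_def .
qed

lemma vh_cs: assumes x: "x \<in> carrier_vec n" and y: "y \<in> carrier_vec n"
  shows "cmod (vh x y) \<le> vnorm x * vnorm y"
proof -
  have "cmod (vh x y) \<le> (\<Sum>i<n. cmod (x $ i) * cmod (y $ i))"
    unfolding vh_def using x by (auto intro!: order_trans[OF norm_sum] simp: norm_mult)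
  also have "\<dots> \<le> sqrt ((\<Sum>i<n. (cmod (x $ i))^2) * (\<Sum>i<n. (cmod (y $ i))^2))"
    by (rule real_le_rsqrt, rule cs_real) auto
  also have "\<dots> = vnorm x * vnorm y" unfolding vnorm_def using x y by (simp add: real_sqrt_mult)
  finally show ?thesis .
qed

lemma vnorm_vh: "x \<in> carrier_vec n \<Longrightarrow> vnorm x = sqrt (Re (vh x x))"
  unfolding vnorm_def using vh_self[of x n] by simp

lemma vnorm_unitary: assumes T: "T \<in> carrier_mat n n" and u: "ctrans T * T = 1\<^sub>m n" and v: "v \<in> carrier_vec n"
  shows "vnorm (T *\<^sub>v v) = vnorm v"
proof -
  have Tv: "T *\<^sub>v v \<in> carrier_vec n" by (rule mult_mat_vec_carrier[OF T v])
  have "vh (T *\<^sub>v v) (T *\<^sub>v v) = vh (ctrans T *\<^sub>v (T *\<^sub>v v)) v" by (rule adjoint[OF T Tv v])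
  also have "ctrans T *\<^sub>v (T *\<^sub>v v) = (ctrans T * T) *\<^sub>v v"
    by (rule assoc_mult_mat_vec[OF ctrans_carrier[OF T] T v, symmetric])
  finally have "vh (T *\<^sub>v v) (T *\<^sub>v v) = vh v v" using u v by simp
  thus ?thesis using vnorm_vh[OF Tv] vnorm_vh[OF v] by simp
qed



lemma Hch_eq: assumes Hd: "Hd \<in> carrier_mat NR NT" and fa: "fa \<in> carrier_vec NR" and fd: "fd \<in> carrier_vec M"
  and ga: "ga \<in> carrier_vec M" and gd: "gd \<in> carrier_vec NT" and Th: "Th \<in> carrier_mat M M"
  shows "Hch Hd fa fd ga gd Th = Hd + vh fd (Th *\<^sub>v ga) \<cdot>\<^sub>m outer fa gd"
proof -
  have v: "ctrans Th *\<^sub>v fd \<in> carrier_vec M" by (rule mult_mat_vec_carrier[OF ctrans_carrier[OF Th] fd])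
  have "outer fa fd * Th * outer ga gd = outer fa (ctrans Th *\<^sub>v fd) * outer ga gd"
    using outer_mult_left[OF fa fd Th] by simp
  also have "\<dots> = vh (ctrans Th *\<^sub>v fd) ga \<cdot>\<^sub>m outer fa gd" by (rule outer_outer[OF fa v ga gd])
  also have "vh (ctrans Th *\<^sub>v fd) ga = vh fd (Th *\<^sub>v ga)" by (rule adjoint[OF Th fd ga, symmetric])
  finally show ?thesis unfolding Hch_def by simp
qed

lemma diag_mv: assumes v: "v \<in> carrier_vec M"
  shows "diag_phase M phi *\<^sub>v v = vec M (\<lambda>i. cis (phi i) * v $ i)"
proof (rule eq_vecI)
  fix i assume "i < dim_vec (vec M (\<lambda>i. cis (phi i) * v $ i))"
  hence i: "i < M" by simp
  have "(diag_phase M phi *\<^sub>v v) $ i = (\<Sum>j\<in>{0..<M}. (if i = j then cis (phi j) else 0) * v $ j)"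
    using i v by (simp add: diag_phase_def mat_diag_def scalar_prod_def)
  also have "\<dots> = (\<Sum>j\<in>{0..<M}. if j = i then cis (phi i) * v $ i else 0)"
    by (rule sum.cong) auto
  also have "\<dots> = cis (phi i) * v $ i" using i by simp
  finally show "(diag_phase M phi *\<^sub>v v) $ i = vec M (\<lambda>i. cis (phi i) * v $ i) $ i" using i by simp
qed (simp add: diag_phase_def mat_diag_def)

lemma vh_diag: assumes fd: "fd \<in> carrier_vec M" and ga: "ga \<in> carrier_vec M"
  shows "vh fd (diag_phase M phi *\<^sub>v ga) = (\<Sum>i<M. cis (phi i) * (cnj (fd $ i) * ga $ i))"
  unfolding diag_mv[OF ga] vh_def using fd by (simp add: mult_ac)

lemma diag_bound: assumes fd: "fd \<in> carrier_vec M" and ga: "ga \<in> carrier_vec M"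
  shows "cmod (vh fd (diag_phase M phi *\<^sub>v ga)) \<le> (\<Sum>m<M. cmod (cnj (fd $ m) * ga $ m))"
  unfolding vh_diag[OF fd ga] by (rule order_trans[OF norm_sum]) (simp add: norm_mult)

lemma diag_opt: assumes fd: "fd \<in> carrier_vec M" and ga: "ga \<in> carrier_vec M"
  and th: "\<And>m. m < M \<Longrightarrow> cnj (fd $ m) * ga $ m \<noteq> 0 \<Longrightarrow> thetat m = - Arg (cnj (fd $ m) * ga $ m)"
  shows "vh fd (diag_phase M thetat *\<^sub>v ga) = of_real (\<Sum>m<M. cmod (cnj (fd $ m) * ga $ m))"
  unfolding vh_diag[OF fd ga] of_real_sum
proof (rule sum.cong)
  fix m assume "m \<in> {..<M}"
  hence m: "m < M" by simp
  show "cis (thetat m) * (cnj (fd $ m) * ga $ m) = of_real (cmod (cnj (fd $ m) * ga $ m))"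
  proof (cases "cnj (fd $ m) * ga $ m = 0")
    case True thus ?thesis by (simp only: mult_zero_right norm_zero of_real_0)
  next
    case False thus ?thesis using th[OF m False] cis_Arg_mult by simp
  qed
qed simp



lemma fbar_dim[simp]: "dim_vec (fbar M p) = M" by (simp add: fbar_def)

lemma fbar_sums: assumes bd: "bd \<ge> 0" and ba: "ba \<ge> 0"
  shows "(\<Sum>m<M. cmod (cnj ((of_real bd \<cdot>\<^sub>v fbar M ph) $ m) * (of_real ba \<cdot>\<^sub>v fbar M ps) $ m))
     = sqrt (\<Sum>i<M. (cmod ((of_real bd \<cdot>\<^sub>v fbar M ph) $ i))^2) * sqrt (\<Sum>i<M. (cmod ((of_real ba \<cdot>\<^sub>v fbar M ps) $ i))^2)"
proof (cases "M = 0")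
  case True thus ?thesis by simp
next
  case False
  hence M: "real M > 0" by simp
  have s: "sqrt (real M) * sqrt (real M) = real M" using M by simp
  have "(\<Sum>m<M. cmod (cnj ((of_real bd \<cdot>\<^sub>v fbar M ph) $ m) * (of_real ba \<cdot>\<^sub>v fbar M ps) $ m))
      = (\<Sum>m<M. bd * ba / real M)"
    by (rule sum.cong) (use bd ba s in \<open>auto simp: fbar_def norm_mult norm_divide\<close>)
  also have "\<dots> = bd * ba" using M by simp
  finally have l: "(\<Sum>m<M. cmod (cnj ((of_real bd \<cdot>\<^sub>v fbar M ph) $ m) * (of_real ba \<cdot>\<^sub>v fbar M ps) $ m)) = bd * ba" .
  have n: "sqrt (\<Sum>i<M. (cmod ((of_real b \<cdot>\<^sub>v fbar M p) $ i))^2) = b" if b: "b \<ge> 0" for b p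
  proof -
    have "(\<Sum>i<M. (cmod ((of_real b \<cdot>\<^sub>v fbar M p) $ i))^2) = (\<Sum>i<M. b^2 / real M)"
      by (rule sum.cong) (use b M in \<open>auto simp: fbar_def norm_mult norm_divide power_divide power_mult_distrib\<close>)
    also have "\<dots> = b^2" using M by simp
    finally show ?thesis using b by simp
  qed
  show ?thesis unfolding l n[OF bd] n[OF ba] ..
qed

theorem mainTheorem4:
  fixes NR NT M :: nat and Hd R :: "complex mat" and fa fd ga gd :: "complex vec"
    and s2 :: real and thetat :: "nat \<Rightarrow> real"
  assumes Hd: "Hd \<in> carrier_mat NR NT"
    and fa: "fa \<in> carrier_vec NR" and fd: "fd \<in> carrier_vec M"
    and ga: "ga \<in> carrier_vec M" and gd: "gd \<in> carrier_vec NT"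
    and R: "herm_psd NT R" and s2: "s2 > 0"
    and thetat: "\<And>m. m < M \<Longrightarrow> cnj (fd $ m) * ga $ m \<noteq> 0 \<Longrightarrow>
                     thetat m = - Arg (cnj (fd $ m) * ga $ m)"
  defines "A \<equiv> 1\<^sub>m NR + of_real (1 / s2) \<cdot>\<^sub>m (Hd * R * ctrans Hd)"
  defines "theta_opt \<equiv> - Arg (vh gd (R * ctrans Hd * minv A *\<^sub>v fa))"
  defines "Th_opt \<equiv> cis theta_opt \<cdot>\<^sub>m diag_phase M thetat"
  shows "(\<forall>phi. rate s2 R (Hch Hd fa fd ga gd (diag_phase M phi))
                 \<le> rate s2 R (Hch Hd fa fd ga gd Th_opt))
     \<and> cmod (vh fd (Th_opt *\<^sub>v ga)) = (\<Sum>m<M. cmod (cnj (fd $ m) * ga $ m))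
     \<and> (\<forall>phi. cmod (vh fd (diag_phase M phi *\<^sub>v ga)) \<le> (\<Sum>m<M. cmod (cnj (fd $ m) * ga $ m)))
     \<and> (\<forall>bd ba ph ps. bd \<ge> 0 \<and> ba \<ge> 0 \<and>
           fd = of_real bd \<cdot>\<^sub>v fbar M ph \<and> ga = of_real ba \<cdot>\<^sub>v fbar M ps \<longrightarrow>
           (\<Sum>m<M. cmod (cnj (fd $ m) * ga $ m)) = vnorm fd * vnorm ga
           \<and> (\<forall>Th \<in> sym_unitary M. rate s2 R (Hch Hd fa fd ga gd Th)
                 \<le> rate s2 R (Hch Hd fa fd ga gd Th_opt)))"

proof -
  have Th_c: "Th_opt \<in> carrier_mat M M" unfolding Th_opt_def diag_phase_def by simp
  define S where "S = (\<Sum>m<M. cmod (cnj (fd $ m) * ga $ m))"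
  have S0: "S \<ge> 0" unfolding S_def by (simp add: sum_nonneg)
  define alpha where "alpha = vh gd (R * ctrans Hd * minv A *\<^sub>v fa)"
  define c0 where "c0 = vh fd (Th_opt *\<^sub>v ga)"
  have dga: "diag_phase M thetat *\<^sub>v ga \<in> carrier_vec M"
    by (rule mult_mat_vec_carrier[of _ M M, OF _ ga]) (simp add: diag_phase_def)
  have "Th_opt *\<^sub>v ga = cis theta_opt \<cdot>\<^sub>v (diag_phase M thetat *\<^sub>v ga)"
    unfolding Th_opt_def by (rule smult_mat_vec[of _ M M, OF _ ga]) (simp add: diag_phase_def)
  hence c0: "c0 = cis theta_opt * of_real S"
    unfolding c0_def S_def using vh_smult[OF fd dga] diag_opt[OF fd ga thetat] by simp
  have cm0: "cmod c0 = S" unfolding c0 using S0 by (simp add: norm_mult)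
  have al: "Re (c0 * alpha) = cmod c0 * cmod alpha"
  proof -
    have "c0 * alpha = of_real S * (cis (- Arg alpha) * alpha)"
      unfolding c0 theta_opt_def alpha_def by (simp add: mult_ac)
    also have "\<dots> = of_real (S * cmod alpha)" by (simp add: cis_Arg_mult)
    finally show ?thesis unfolding cm0 by simp
  qed
  have key: "rate s2 R (Hch Hd fa fd ga gd Th) \<le> rate s2 R (Hch Hd fa fd ga gd Th_opt)"
    if Th: "Th \<in> carrier_mat M M" and le: "cmod (vh fd (Th *\<^sub>v ga)) \<le> S" for Th
  proof -
    have "rate s2 R (Hd + vh fd (Th *\<^sub>v ga) \<cdot>\<^sub>m outer fa gd) \<le> rate s2 R (Hd + c0 \<cdot>\<^sub>m outer fa gd)"
      by (rule core[OF Hd fa gd R s2 _ alpha_def]) (use le cm0 al A_def in auto)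
    thus ?thesis unfolding Hch_eq[OF Hd fa fd ga gd Th] Hch_eq[OF Hd fa fd ga gd Th_c] c0_def .
  qed
  have p3: "\<forall>phi. cmod (vh fd (diag_phase M phi *\<^sub>v ga)) \<le> S"
    unfolding S_def using diag_bound[OF fd ga] by blast
  have p1: "\<forall>phi. rate s2 R (Hch Hd fa fd ga gd (diag_phase M phi))
                 \<le> rate s2 R (Hch Hd fa fd ga gd Th_opt)"
    using key p3 by (simp add: diag_phase_def)
  have p2: "cmod (vh fd (Th_opt *\<^sub>v ga)) = S" using cm0 c0_def by simp
  have p4: "(\<forall>bd ba ph ps. bd \<ge> 0 \<and> ba \<ge> 0 \<and>
           fd = of_real bd \<cdot>\<^sub>v fbar M ph \<and> ga = of_real ba \<cdot>\<^sub>v fbar M ps \<longrightarrow>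
           S = vnorm fd * vnorm ga
           \<and> (\<forall>Th \<in> sym_unitary M. rate s2 R (Hch Hd fa fd ga gd Th)
                 \<le> rate s2 R (Hch Hd fa fd ga gd Th_opt)))"
  proof (intro allI impI)
    fix bd ba ph ps
    assume "bd \<ge> 0 \<and> ba \<ge> 0 \<and> fd = of_real bd \<cdot>\<^sub>v fbar M ph \<and> ga = of_real ba \<cdot>\<^sub>v fbar M ps"
    hence bd: "bd \<ge> 0" and ba: "ba \<ge> 0" and fde: "fd = of_real bd \<cdot>\<^sub>v fbar M ph"
      and gae: "ga = of_real ba \<cdot>\<^sub>v fbar M ps" by auto
    have SN: "S = vnorm fd * vnorm ga" unfolding S_def vnorm_def fde gae
      using fbar_sums[OF bd ba] by simp
    show "S = vnorm fd * vnorm ga \<and> (\<forall>Th \<in> sym_unitary M. rate s2 R (Hch Hd fa fd ga gd Th)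
                 \<le> rate s2 R (Hch Hd fa fd ga gd Th_opt))"
    proof (intro conjI ballI)
      show "S = vnorm fd * vnorm ga" by (rule SN)
      fix Th assume "Th \<in> sym_unitary M"
      hence Th: "Th \<in> carrier_mat M M" and u: "ctrans Th * Th = 1\<^sub>m M" unfolding sym_unitary_def by auto
      have Tga: "Th *\<^sub>v ga \<in> carrier_vec M" by (rule mult_mat_vec_carrier[OF Th ga])
      have "cmod (vh fd (Th *\<^sub>v ga)) \<le> vnorm fd * vnorm (Th *\<^sub>v ga)" by (rule vh_cs[OF fd Tga])
      also have "\<dots> = S" unfolding SN vnorm_unitary[OF Th u ga] ..
      finally show "rate s2 R (Hch Hd fa fd ga gd Th) \<le> rate s2 R (Hch Hd fa fd ga gd Th_opt)"
        by (rule key[OF Th])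
    qed
  qed
  show ?thesis using p1 p2 p3 p4 unfolding S_def by blast
qed

end
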